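(* Under the standing assumptions stated in the context, $\lim_{\beta\to\infty}\mu_\beta(\check{\mathcal S}(0))/\mu_\beta(\mathcal S)=1$, where $\check{\mathcal S}(0)=\{\sigma\in\mathcal S:\mathrm{supp}[\sigma]\cap B_{L_\beta,L_\beta}(0)=\emptyset\}$.
   Context: Kawasaki setting. Fix $U>0$ and $\Delta$ with $U<\Delta<2U$ and $U/(2U-\Delta)\notin\mathbb N$; $\ell_c=\lceil U/(2U-\Delta)\rceil$. $\Lambda_\beta\subset\mathbb Z^2$: square box of odd side length centred at the origin with periodic boundary conditions. $\rho_\beta=e^{-\beta\Delta}$, $n_\beta=\lceil\rho_\beta|\Lambda_\beta|\rceil$. Assume $|\Lambda_\beta|\rho_\beta\to\infty$ and $|\Lambda_\beta|e^{-\beta\Gamma}\to0$, where $\Gamma=-U\,b+\Delta[\ell_c(\ell_c-1)+2]$ and $b$ is the number of nearest-neighbour pairs inside a proto-critical droplet (a set of $\ell_c(\ell_c-1)+1$ sites forming either an $(\ell_c-2)\times(\ell_c-2)$ square with four bars on its sides of total length $3\ell_c-3$, or an $(\ell_c-1)\times(\ell_c-3)$ rectangle with four bars of total length $3\ell_c-2$). $\mathcal X_\beta^{(m)}=\{\sigma\in\{0,1\}^{\Lambda_\beta}:|\mathrm{supp}[\sigma]|=m\}$. $H_\beta(\sigma)=-U\sum_{\{x,y\}}\sigma(x)\sigma(y)$ (unordered nearest-neighbour pairs); canonical Gibbs measure $\mu_\beta=e^{-\beta H_\beta}/Z_\beta^{(n_\beta)}$ on $\mathcal X_\beta^{(n_\beta)}$.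 $L_\beta$ odd with $L_\beta^2=e^{(\Delta-\delta_\beta)\beta}$, $\delta_\beta\to0$, $\beta\delta_\beta\to\infty$; $B_{L,L}(x)$: square box of side $L$ centred at $x$. $\mathcal S=\{\sigma\in\mathcal X_\beta^{(n_\beta)}:|\mathrm{supp}[\sigma]\cap B_{L_\beta,L_\beta}(x)|\le\ell_c(\ell_c-1)+1\ \forall x\in\Lambda_\beta\}$. *)

theory Defs
  imports Complex_Main
begin

type_synonym site = "int \<times> int"
type_synonym config = "site \<Rightarrow> nat"

definition ell_c :: "real \<Rightarrow> real \<Rightarrow> nat" where
  "ell_c U D = nat \<lceil>U / (2*U - D)\<rceil>"

text \<open>Number of nearest-neighbour pairs inside a proto-critical droplet
  (both shapes): (l-1)^2 + l(l-2) + 1 = 2(l-1)^2.\<close>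
definition b_pc :: "nat \<Rightarrow> real" where
  "b_pc l = (real l - 1)^2 + real l * (real l - 2) + 1"

definition Gamma :: "real \<Rightarrow> real \<Rightarrow> real" where
  "Gamma U D = - U * b_pc (ell_c U D)
     + D * (real (ell_c U D) * (real (ell_c U D) - 1) + 2)"

text \<open>Torus of odd side length N centred at the origin.\<close>
definition half :: "nat \<Rightarrow> int" where
  "half N = (int N - 1) div 2"

definition Lam :: "nat \<Rightarrow> site set" where
  "Lam N = {- half N .. half N} \<times> {- half N .. half N}"

definition cadj :: "nat \<Rightarrow> int \<Rightarrow> int \<Rightarrow> bool" where
  "cadj N a b \<longleftrightarrow> (a - b) mod int N = 1 \<or> (b - a) mod int N = 1"

definition tadj :: "nat \<Rightarrow> site \<Rightarrow> site \<Rightarrow> bool" where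
  "tadj N x y \<longleftrightarrow> x \<noteq> y \<and>
     ((cadj N (fst x) (fst y) \<and> snd x = snd y) \<or> (fst x = fst y \<and> cadj N (snd x) (snd y)))"

definition nn_pairs :: "nat \<Rightarrow> site set set" where
  "nn_pairs N = {{x, y} | x y. x \<in> Lam N \<and> y \<in> Lam N \<and> tadj N x y}"

definition tdist :: "nat \<Rightarrow> int \<Rightarrow> int \<Rightarrow> int" where
  "tdist N a b = min ((a - b) mod int N) ((b - a) mod int N)"

definition box :: "nat \<Rightarrow> nat \<Rightarrow> site \<Rightarrow> site set" where
  "box N L x = {y \<in> Lam N. tdist N (fst x) (fst y) \<le> (int L - 1) div 2
                          \<and> tdist N (snd x) (snd y) \<le> (int L - 1) div 2}"

definition supp :: "nat \<Rightarrow> config \<Rightarrow> site set" where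
  "supp N \<sigma> = {x \<in> Lam N. \<sigma> x = 1}"

definition Xm :: "nat \<Rightarrow> nat \<Rightarrow> config set" where
  "Xm N m = {\<sigma>. (\<forall>x. \<sigma> x \<in> {0, 1}) \<and> (\<forall>x. x \<notin> Lam N \<longrightarrow> \<sigma> x = 0)
               \<and> card (supp N \<sigma>) = m}"

definition Ham :: "real \<Rightarrow> nat \<Rightarrow> config \<Rightarrow> real" where
  "Ham U N \<sigma> = - U * (\<Sum>p\<in>nn_pairs N. \<Prod>x\<in>p. real (\<sigma> x))"

definition n_part :: "real \<Rightarrow> nat \<Rightarrow> real \<Rightarrow> nat" where
  "n_part D N \<beta> = nat \<lceil>exp (- \<beta> * D) * real (card (Lam N))\<rceil>"

definition gibbs :: "real \<Rightarrow> real \<Rightarrow> nat \<Rightarrow> real \<Rightarrow> config set \<Rightarrow> real" where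
  "gibbs U D N \<beta> A =
     (\<Sum>\<sigma>\<in>A \<inter> Xm N (n_part D N \<beta>). exp (- \<beta> * Ham U N \<sigma>))
     / (\<Sum>\<sigma>\<in>Xm N (n_part D N \<beta>). exp (- \<beta> * Ham U N \<sigma>))"

definition Sset :: "real \<Rightarrow> real \<Rightarrow> nat \<Rightarrow> nat \<Rightarrow> real \<Rightarrow> config set" where
  "Sset U D N L \<beta> = {\<sigma> \<in> Xm N (n_part D N \<beta>).
      \<forall>x\<in>Lam N. card (supp N \<sigma> \<inter> box N L x) \<le> ell_c U D * (ell_c U D - 1) + 1}"

definition Scheck0 :: "real \<Rightarrow> real \<Rightarrow> nat \<Rightarrow> nat \<Rightarrow> real \<Rightarrow> config set" where
  "Scheck0 U D N L \<beta> = {\<sigma> \<in> Sset U D N L \<beta>. supp N \<sigma> \<inter> box N L (0, 0) = {}}"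

end

theory Submission
  imports Defs
begin


definition wrap :: "nat \<Rightarrow> int \<Rightarrow> int" where
  "wrap N a = (a + half N) mod int N - half N"

lemma odd_half: "odd N \<Longrightarrow> int N = 2 * half N + 1 \<and> half N \<ge> 0"
  unfolding half_def by (auto elim!: oddE)

lemma wrap_range: assumes "odd N" shows "- half N \<le> wrap N a \<and> wrap N a \<le> half N"
proof -
  have h: "int N = 2 * half N + 1" "half N \<ge> 0" using odd_half[OF assms] by auto
  have p: "int N > 0" using h by linarith
  have "0 \<le> (a + half N) mod int N" "(a + half N) mod int N < int N" using p by simp_all
  thus ?thesis unfolding wrap_def using h by linarith
qed

lemma wrap_mod: "wrap N a mod int N = a mod int N"
  unfolding wrap_def by (simp add: mod_diff_left_eq)

lemma wrap_id: assumes "odd N" "- half N \<le> a" "a \<le> half N" shows "wrap N a = a"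
proof -
  have h: "int N = 2 * half N + 1" "half N \<ge> 0" using odd_half[OF assms(1)] by auto
  have "(a + half N) mod int N = a + half N" using h assms by (intro mod_pos_pos_trivial) auto
  thus ?thesis unfolding wrap_def by simp
qed

lemma wrap_eq: assumes "a mod int N = b mod int N" shows "wrap N a = wrap N b"
proof -
  have "(a + half N) mod int N = (a mod int N + half N) mod int N" by (simp add: mod_add_left_eq)
  also have "\<dots> = (b mod int N + half N) mod int N" using assms by simp
  also have "\<dots> = (b + half N) mod int N" by (simp add: mod_add_left_eq)
  finally show ?thesis unfolding wrap_def by simp
qed

lemma range_mod_eq: assumes "odd N" "- half N \<le> a" "a \<le> half N" "- half N \<le> b" "b \<le> half N"
  "a mod int N = b mod int N" shows "a = b"
  using wrap_id[OF assms(1-3)] wrap_id[OF assms(1,4,5)] wrap_eq[OF assms(6)] by linarith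

lemma Lam_iff: "x \<in> Lam N \<longleftrightarrow> - half N \<le> fst x \<and> fst x \<le> half N \<and> - half N \<le> snd x \<and> snd x \<le> half N"
  unfolding Lam_def by (cases x) auto

definition sh :: "nat \<Rightarrow> int \<Rightarrow> int \<Rightarrow> site \<Rightarrow> site" where
  "sh N c d x = (wrap N (fst x + c), wrap N (snd x + d))"

lemma sh_Lam: "odd N \<Longrightarrow> sh N c d x \<in> Lam N"
  unfolding Lam_iff sh_def using wrap_range by auto

lemma sh_inv: assumes "odd N" "x \<in> Lam N" shows "sh N (-c) (-d) (sh N c d x) = x"
proof -
  have 1: "wrap N (wrap N (a + c) + - c) = a" if "- half N \<le> a" "a \<le> half N" for a c
  proof -
    have "(wrap N (a + c) + - c) mod int N = a mod int N"
    proof -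
      have "(wrap N (a + c) + - c) mod int N = (wrap N (a + c) mod int N + - c) mod int N"
        by (simp add: mod_diff_left_eq)
      also have "\<dots> = ((a + c) mod int N + - c) mod int N" by (simp only: wrap_mod)
      also have "\<dots> = a mod int N" by (simp add: mod_diff_left_eq)
      finally show ?thesis .
    qed
    hence "wrap N (wrap N (a + c) + - c) = wrap N a" by (rule wrap_eq)
    thus ?thesis using wrap_id[OF assms(1) that] by simp
  qed
  obtain a b where x: "x = (a, b)" by (cases x)
  have ha: "- half N \<le> a" "a \<le> half N" and hb: "- half N \<le> b" "b \<le> half N"
    using assms(2) unfolding x Lam_iff by auto
  have "sh N (-c) (-d) (sh N c d x) = (wrap N (wrap N (a + c) + - c), wrap N (wrap N (b + d) + - d))"
    unfolding sh_def x by (simp only: fst_conv snd_conv)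
  also have "\<dots> = (a, b)" by (simp only: 1[OF ha, of c] 1[OF hb, of d])
  finally show ?thesis unfolding x .
qed

lemma wrap_diff: "(wrap N a - wrap N b) mod int N = (a - b) mod int N"
proof -
  have "(wrap N a - wrap N b) mod int N = (wrap N a mod int N - wrap N b mod int N) mod int N"
    by (simp add: mod_diff_eq)
  also have "\<dots> = (a mod int N - b mod int N) mod int N" by (simp only: wrap_mod)
  also have "\<dots> = (a - b) mod int N" by (simp add: mod_diff_eq)
  finally show ?thesis .
qed

lemma sh_fst_diff: "(fst (sh N c d u) - fst (sh N c d v)) mod int N = (fst u - fst v) mod int N"
  unfolding sh_def by (simp add: wrap_diff)
lemma sh_snd_diff: "(snd (sh N c d u) - snd (sh N c d v)) mod int N = (snd u - snd v) mod int N"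
  unfolding sh_def by (simp add: wrap_diff)

lemma mod_diff_zero: "(a - b) mod int N = 0 \<longleftrightarrow> a mod int N = b mod int N"
  by (simp add: mod_eq_dvd_iff dvd_eq_mod_eq_0)

lemma sh_fst_eq: assumes "odd N" "u \<in> Lam N" "v \<in> Lam N"
  shows "fst (sh N c d u) = fst (sh N c d v) \<longleftrightarrow> fst u = fst v"
proof
  assume "fst (sh N c d u) = fst (sh N c d v)"
  hence "(fst u - fst v) mod int N = 0" using sh_fst_diff[of N c d u v] by simp
  thus "fst u = fst v" using range_mod_eq[OF assms(1), of "fst u" "fst v"] assms
    unfolding Lam_iff mod_diff_zero by blast
qed (simp add: sh_def)

lemma sh_snd_eq: assumes "odd N" "u \<in> Lam N" "v \<in> Lam N"
  shows "snd (sh N c d u) = snd (sh N c d v) \<longleftrightarrow> snd u = snd v"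
proof
  assume "snd (sh N c d u) = snd (sh N c d v)"
  hence "(snd u - snd v) mod int N = 0" using sh_snd_diff[of N c d u v] by simp
  thus "snd u = snd v" using range_mod_eq[OF assms(1), of "snd u" "snd v"] assms
    unfolding Lam_iff mod_diff_zero by blast
qed (simp add: sh_def)

lemma sh_eq: assumes "odd N" "u \<in> Lam N" "v \<in> Lam N"
  shows "sh N c d u = sh N c d v \<longleftrightarrow> u = v"
  using sh_fst_eq[OF assms, of c d] sh_snd_eq[OF assms, of c d] by (simp add: prod_eq_iff)

lemma tadj_sh: assumes "odd N" "u \<in> Lam N" "v \<in> Lam N"
  shows "tadj N (sh N c d u) (sh N c d v) = tadj N u v"
  unfolding tadj_def cadj_def
  using sh_eq[OF assms, of c d] sh_fst_eq[OF assms, of c d] sh_snd_eq[OF assms, of c d]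
    sh_fst_diff[of N c d u v] sh_fst_diff[of N c d v u] sh_snd_diff[of N c d u v] sh_snd_diff[of N c d v u]
  by simp

lemma tdist_sh_fst: "tdist N (fst (sh N c d u)) (fst (sh N c d v)) = tdist N (fst u) (fst v)"
  unfolding tdist_def using sh_fst_diff[of N c d u v] sh_fst_diff[of N c d v u] by simp
lemma tdist_sh_snd: "tdist N (snd (sh N c d u)) (snd (sh N c d v)) = tdist N (snd u) (snd v)"
  unfolding tdist_def using sh_snd_diff[of N c d u v] sh_snd_diff[of N c d v u] by simp

lemma sh_inv2: assumes "odd N" "x \<in> Lam N" shows "sh N c d (sh N (-c) (-d) x) = x"
  using sh_inv[OF assms, of "-c" "-d"] by simp

lemma sh_image_Lam: assumes "odd N" shows "sh N c d ` Lam N = Lam N"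
proof
  show "sh N c d ` Lam N \<subseteq> Lam N" using sh_Lam[OF assms] by auto
  show "Lam N \<subseteq> sh N c d ` Lam N"
  proof
    fix x assume "x \<in> Lam N"
    hence "x = sh N c d (sh N (-c) (-d) x)" using sh_inv2[OF assms] by simp
    thus "x \<in> sh N c d ` Lam N" using sh_Lam[OF assms, of "-c" "-d" x] by blast
  qed
qed

lemma sh_inj: "odd N \<Longrightarrow> inj_on (sh N c d) (Lam N)"
  unfolding inj_on_def using sh_eq by blast

lemma box_sub: "box N L x \<subseteq> Lam N" unfolding box_def by auto

lemma box_sh: assumes "odd N" shows "box N L (sh N c d x) = sh N c d ` box N L x"
proof
  show "sh N c d ` box N L x \<subseteq> box N L (sh N c d x)"
  proof
    fix w assume "w \<in> sh N c d ` box N L x"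
    then obtain z where z: "z \<in> box N L x" "w = sh N c d z" by blast
    show "w \<in> box N L (sh N c d x)" using z sh_Lam[OF assms, of c d z]
      tdist_sh_fst[of N c d x z] tdist_sh_snd[of N c d x z] unfolding box_def by simp
  qed
  show "box N L (sh N c d x) \<subseteq> sh N c d ` box N L x"
  proof
    fix w assume w: "w \<in> box N L (sh N c d x)"
    hence wL: "w \<in> Lam N" unfolding box_def by auto
    define z where "z = sh N (-c) (-d) w"
    have zw: "sh N c d z = w" unfolding z_def using sh_inv2[OF assms wL] .
    have t1: "tdist N (fst x) (fst z) = tdist N (fst (sh N c d x)) (fst w)"
      using tdist_sh_fst[of N c d x z] zw by simp
    have t2: "tdist N (snd x) (snd z) = tdist N (snd (sh N c d x)) (snd w)"
      using tdist_sh_snd[of N c d x z] zw by simp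
    have "z \<in> box N L x" using w sh_Lam[OF assms, of "-c" "-d" w] t1 t2
      unfolding box_def z_def[symmetric] by simp
    thus "w \<in> sh N c d ` box N L x" using zw by blast
  qed
qed




definition tr :: "nat \<Rightarrow> int \<Rightarrow> int \<Rightarrow> config \<Rightarrow> config" where
  "tr N c d \<sigma> = (\<lambda>x. if x \<in> Lam N then \<sigma> (sh N c d x) else 0)"

lemma supp_sub: "supp N \<sigma> \<subseteq> Lam N" unfolding supp_def by auto

lemma supp_tr: "odd N \<Longrightarrow> supp N (tr N c d \<sigma>) = Lam N \<inter> sh N c d -` supp N \<sigma>"
  unfolding supp_def tr_def using sh_Lam by auto

lemma card_supp_tr_Int: assumes "odd N" "A \<subseteq> Lam N"
  shows "card (supp N (tr N c d \<sigma>) \<inter> A) = card (supp N \<sigma> \<inter> sh N c d ` A)"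
proof -
  have inj: "inj_on (sh N c d) (supp N (tr N c d \<sigma>) \<inter> A)"
    by (rule inj_on_subset[OF sh_inj[OF assms(1)]]) (use assms(2) in blast)
  have "sh N c d ` (supp N (tr N c d \<sigma>) \<inter> A) = supp N \<sigma> \<inter> sh N c d ` A"
    unfolding supp_tr[OF assms(1)]
  proof
    show "sh N c d ` (Lam N \<inter> sh N c d -` supp N \<sigma> \<inter> A) \<subseteq> supp N \<sigma> \<inter> sh N c d ` A"
      by (auto simp del: vimage_eq simp add: vimage_def)
    show "supp N \<sigma> \<inter> sh N c d ` A \<subseteq> sh N c d ` (Lam N \<inter> sh N c d -` supp N \<sigma> \<inter> A)"
    proof
      fix w assume "w \<in> supp N \<sigma> \<inter> sh N c d ` A"
      then obtain z where z: "z \<in> A" "w = sh N c d z" "w \<in> supp N \<sigma>" by blast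
      hence "z \<in> Lam N \<inter> sh N c d -` supp N \<sigma> \<inter> A" using assms(2) by blast
      thus "w \<in> sh N c d ` (Lam N \<inter> sh N c d -` supp N \<sigma> \<inter> A)" using z(2) by blast
    qed
  qed
  thus ?thesis using card_image[OF inj] by simp
qed

lemma tr_Xm: assumes "odd N" "\<sigma> \<in> Xm N m" shows "tr N c d \<sigma> \<in> Xm N m"
proof -
  have "card (supp N (tr N c d \<sigma>)) = card (supp N (tr N c d \<sigma>) \<inter> Lam N)"
    using supp_sub[of N "tr N c d \<sigma>"] by (simp add: Int_absorb2)
  also have "\<dots> = card (supp N \<sigma> \<inter> Lam N)"
    using card_supp_tr_Int[OF assms(1), of "Lam N"] sh_image_Lam[OF assms(1)] by simp
  also have "\<dots> = m" using assms(2) supp_sub[of N \<sigma>] unfolding Xm_def by (simp add: Int_absorb2)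
  finally have cd: "card (supp N (tr N c d \<sigma>)) = m" .
  have v: "\<forall>x. \<sigma> x \<in> {0, 1}" using assms(2) unfolding Xm_def by blast
  have "tr N c d \<sigma> x \<in> {0, 1}" for x
    unfolding tr_def using v[rule_format, of "sh N c d x"] v[rule_format, of x] by simp
  moreover have "\<forall>x. x \<notin> Lam N \<longrightarrow> tr N c d \<sigma> x = 0" unfolding tr_def by simp
  ultimately show ?thesis using cd unfolding Xm_def by blast
qed

lemma nn_sub: "p \<in> nn_pairs N \<Longrightarrow> p \<subseteq> Lam N"
  unfolding nn_pairs_def by auto

lemma nn_pairs_sh: assumes "odd N" shows "(\<lambda>p. sh N c d ` p) ` nn_pairs N = nn_pairs N"
proof
  show "(\<lambda>p. sh N c d ` p) ` nn_pairs N \<subseteq> nn_pairs N"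
  proof
    fix q assume "q \<in> (\<lambda>p. sh N c d ` p) ` nn_pairs N"
    then obtain x y where xy: "x \<in> Lam N" "y \<in> Lam N" "tadj N x y" "q = sh N c d ` {x, y}"
      unfolding nn_pairs_def by blast
    have "tadj N (sh N c d x) (sh N c d y)" using tadj_sh[OF assms xy(1,2)] xy(3) by simp
    moreover have "q = {sh N c d x, sh N c d y}" using xy(4) by simp
    ultimately show "q \<in> nn_pairs N" using sh_Lam[OF assms, of c d x] sh_Lam[OF assms, of c d y]
      unfolding nn_pairs_def by blast
  qed
  show "nn_pairs N \<subseteq> (\<lambda>p. sh N c d ` p) ` nn_pairs N"
  proof
    fix q assume "q \<in> nn_pairs N"
    then obtain x y where xy: "x \<in> Lam N" "y \<in> Lam N" "tadj N x y" "q = {x, y}"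
      unfolding nn_pairs_def by blast
    define x' where "x' = sh N (-c) (-d) x"
    define y' where "y' = sh N (-c) (-d) y"
    have L: "x' \<in> Lam N" "y' \<in> Lam N" unfolding x'_def y'_def using sh_Lam[OF assms] by auto
    have e: "sh N c d x' = x" "sh N c d y' = y" unfolding x'_def y'_def using sh_inv2[OF assms] xy by auto
    have "tadj N x' y'" using tadj_sh[OF assms L, of c d] e xy(3) by simp
    hence "{x', y'} \<in> nn_pairs N" using L unfolding nn_pairs_def by blast
    moreover have "q = sh N c d ` {x', y'}" using e xy(4) by auto
    ultimately show "q \<in> (\<lambda>p. sh N c d ` p) ` nn_pairs N" by blast
  qed
qed

lemma Ham_tr: assumes "odd N" shows "Ham U N (tr N c d \<sigma>) = Ham U N \<sigma>"
proof -
  let ?g = "\<lambda>q. \<Prod>x\<in>q. real (\<sigma> x)"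
  have inj: "inj_on (\<lambda>p. sh N c d ` p) (nn_pairs N)"
  proof (rule inj_onI)
    fix p q assume "p \<in> nn_pairs N" "q \<in> nn_pairs N" "sh N c d ` p = sh N c d ` q"
    thus "p = q" using inj_on_image_eq_iff[OF sh_inj[OF assms] nn_sub nn_sub] by blast
  qed
  have "(\<Sum>p\<in>nn_pairs N. \<Prod>x\<in>p. real (tr N c d \<sigma> x)) = (\<Sum>p\<in>nn_pairs N. ?g (sh N c d ` p))"
  proof (rule sum.cong[OF refl])
    fix p assume p: "p \<in> nn_pairs N"
    have injp: "inj_on (sh N c d) p" using sh_inj[OF assms] nn_sub[OF p] inj_on_subset by blast
    have "(\<Prod>x\<in>p. real (tr N c d \<sigma> x)) = (\<Prod>x\<in>p. real (\<sigma> (sh N c d x)))"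
      using nn_sub[OF p] unfolding tr_def by (intro prod.cong) auto
    also have "\<dots> = ?g (sh N c d ` p)" using prod.reindex[OF injp, of "\<lambda>x. real (\<sigma> x)"] by simp
    finally show "(\<Prod>x\<in>p. real (tr N c d \<sigma> x)) = ?g (sh N c d ` p)" .
  qed
  also have "\<dots> = sum ?g ((\<lambda>p. sh N c d ` p) ` nn_pairs N)"
    using sum.reindex[OF inj, of ?g] by simp
  also have "\<dots> = sum ?g (nn_pairs N)" using nn_pairs_sh[OF assms] by simp
  finally show ?thesis unfolding Ham_def by simp
qed

lemma tr_Sset: assumes "odd N" "\<sigma> \<in> Sset U D N L \<beta>" shows "tr N c d \<sigma> \<in> Sset U D N L \<beta>"
proof -
  have X: "tr N c d \<sigma> \<in> Xm N (n_part D N \<beta>)" using tr_Xm[OF assms(1)] assms(2) unfolding Sset_def by auto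
  have "card (supp N (tr N c d \<sigma>) \<inter> box N L x) \<le> ell_c U D * (ell_c U D - 1) + 1" if x: "x \<in> Lam N" for x
  proof -
    have "card (supp N (tr N c d \<sigma>) \<inter> box N L x) = card (supp N \<sigma> \<inter> box N L (sh N c d x))"
      using card_supp_tr_Int[OF assms(1) box_sub] box_sh[OF assms(1)] by simp
    thus ?thesis using assms(2) sh_Lam[OF assms(1)] unfolding Sset_def by auto
  qed
  thus ?thesis using X unfolding Sset_def by auto
qed

lemma tr_inv: assumes "odd N" "\<sigma> \<in> Xm N m" shows "tr N (-c) (-d) (tr N c d \<sigma>) = \<sigma>"
proof
  fix x show "tr N (-c) (-d) (tr N c d \<sigma>) x = \<sigma> x"
  proof (cases "x \<in> Lam N")
    case True thus ?thesis unfolding tr_def using sh_Lam[OF assms(1)] sh_inv2[OF assms(1) True] by simp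
  next
    case False
    have z: "\<forall>x. x \<notin> Lam N \<longrightarrow> \<sigma> x = 0" using assms(2) unfolding Xm_def by blast
    have "tr N (-c) (-d) (tr N c d \<sigma>) x = 0" unfolding tr_def using False by simp
    moreover have "\<sigma> x = 0" using z False by blast
    ultimately show ?thesis by simp
  qed
qed

lemma tr_bij: assumes "odd N" shows "bij_betw (tr N c d) (Sset U D N L \<beta>) (Sset U D N L \<beta>)"
proof (rule bij_betw_byWitness[where f' = "tr N (-c) (-d)"])
  show "\<forall>a\<in>Sset U D N L \<beta>. tr N (- c) (- d) (tr N c d a) = a"
    using tr_inv[OF assms] unfolding Sset_def by blast
  show "\<forall>a\<in>Sset U D N L \<beta>. tr N c d (tr N (- c) (- d) a) = a"
    using tr_inv[OF assms, of _ _ "-c" "-d"] unfolding Sset_def by force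
  show "tr N c d ` Sset U D N L \<beta> \<subseteq> Sset U D N L \<beta>" using tr_Sset[OF assms] by blast
  show "tr N (- c) (- d) ` Sset U D N L \<beta> \<subseteq> Sset U D N L \<beta>" using tr_Sset[OF assms] by blast
qed

lemma zero_Lam: "odd N \<Longrightarrow> (0, 0) \<in> Lam N"
  using odd_half[of N] unfolding Lam_iff by auto

lemma F_const: assumes "odd N" "y \<in> Lam N" and that: "\<And>\<sigma>. w (tr N (fst y) (snd y) \<sigma>) = w \<sigma>"
  shows "(\<Sum>\<sigma>\<in>Sset U D N L \<beta>. w \<sigma> * real (\<sigma> y)) = (\<Sum>\<sigma>\<in>Sset U D N L \<beta>. w \<sigma> * real (\<sigma> (0,0)))"
proof -
  have y: "sh N (fst y) (snd y) (0, 0) = y"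
    using assms unfolding sh_def Lam_iff by (simp add: wrap_id prod_eq_iff)
  have "(\<Sum>\<sigma>\<in>Sset U D N L \<beta>. w \<sigma> * real (\<sigma> (0,0)))
      = (\<Sum>\<sigma>\<in>Sset U D N L \<beta>. w (tr N (fst y) (snd y) \<sigma>) * real (tr N (fst y) (snd y) \<sigma> (0,0)))"
    using sum.reindex_bij_betw[OF tr_bij[OF assms(1)], of "\<lambda>\<sigma>. w \<sigma> * real (\<sigma> (0,0))"] by simp
  also have "\<dots> = (\<Sum>\<sigma>\<in>Sset U D N L \<beta>. w \<sigma> * real (\<sigma> y))"
    using that y zero_Lam[OF assms(1)] unfolding tr_def by simp
  finally show ?thesis by simp
qed




lemma finite_Lam: "finite (Lam N)" unfolding Lam_def by simp

lemma finite_Xm: "finite (Xm N m)"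
proof (rule finite_subset)
  show "Xm N m \<subseteq> {f. \<forall>x. (x \<in> Lam N \<longrightarrow> f x \<in> {0,1}) \<and> (x \<notin> Lam N \<longrightarrow> f x = 0)}"
    unfolding Xm_def by blast
  show "finite {f. \<forall>x. (x \<in> Lam N \<longrightarrow> f x \<in> {0,1::nat}) \<and> (x \<notin> Lam N \<longrightarrow> f x = 0)}"
    by (rule finite_set_of_finite_funs) (simp_all add: finite_Lam)
qed

lemma finite_Sset: "finite (Sset U D N L \<beta>)"
  by (rule finite_subset[OF _ finite_Xm[of N "n_part D N \<beta>"]]) (auto simp: Sset_def)

lemma sum_real_sigma: assumes "\<sigma> \<in> Xm N m" shows "(\<Sum>y\<in>Lam N. real (\<sigma> y)) = real m"
proof -
  have v: "\<forall>x. \<sigma> x \<in> {0, 1}" and c: "card (supp N \<sigma>) = m" using assms unfolding Xm_def by blast+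
  have "(\<Sum>y\<in>Lam N. real (\<sigma> y)) = (\<Sum>y\<in>Lam N. if \<sigma> y = 1 then 1 else 0)"
  proof (rule sum.cong[OF refl])
    fix y show "real (\<sigma> y) = (if \<sigma> y = 1 then 1 else 0)" using v[rule_format, of y] by auto
  qed
  also have "\<dots> = (\<Sum>y\<in>{y\<in>Lam N. \<sigma> y = 1}. 1)"
    using sum.inter_filter[OF finite_Lam, where g = "\<lambda>_. 1::real" and P = "\<lambda>y. \<sigma> y = 1"] by simp
  also have "\<dots> = real m" using c unfolding supp_def by simp
  finally show ?thesis .
qed

lemma main_bound:
  fixes U D \<beta> :: real and N L :: nat
  assumes N: "odd N"
  defines "S \<equiv> Sset U D N L \<beta>" and "C \<equiv> Scheck0 U D N L \<beta>" and "B \<equiv> box N L (0, 0)"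
    and "w \<equiv> \<lambda>\<sigma>. exp (- \<beta> * Ham U N \<sigma>)" and "n \<equiv> n_part D N \<beta>"
  shows "(\<Sum>\<sigma>\<in>S. w \<sigma>) - (\<Sum>\<sigma>\<in>C. w \<sigma>) \<le> real (card B) * real n / real (card (Lam N)) * (\<Sum>\<sigma>\<in>S. w \<sigma>)"
    and "C \<subseteq> S"
proof -
  define F where "F y = (\<Sum>\<sigma>\<in>S. w \<sigma> * real (\<sigma> y))" for y
  have fS: "finite S" unfolding S_def by (rule finite_Sset)
  have wpos: "w \<sigma> > 0" for \<sigma> unfolding w_def by simp
  have Fc: "F y = F (0, 0)" if "y \<in> Lam N" for y
    unfolding F_def S_def w_def by (rule F_const[OF N that]) (simp add: Ham_tr[OF N])
  have "(\<Sum>y\<in>Lam N. F y) = (\<Sum>\<sigma>\<in>S. w \<sigma> * (\<Sum>y\<in>Lam N. real (\<sigma> y)))"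
    unfolding F_def by (simp add: sum.swap[of _ "Lam N"] sum_distrib_left)
  also have "\<dots> = (\<Sum>\<sigma>\<in>S. w \<sigma> * real n)"
    by (rule sum.cong[OF refl]) (simp add: sum_real_sigma S_def Sset_def n_def)
  finally have "real (card (Lam N)) * F (0, 0) = real n * (\<Sum>\<sigma>\<in>S. w \<sigma>)"
    using Fc by (simp add: sum_distrib_left mult.commute)
  moreover have cL: "card (Lam N) > 0" using zero_Lam[OF N] finite_Lam card_gt_0_iff by blast
  ultimately have F0: "F (0, 0) = real n * (\<Sum>\<sigma>\<in>S. w \<sigma>) / real (card (Lam N))"
    by (simp add: field_simps)
  show CS: "C \<subseteq> S" unfolding C_def S_def Scheck0_def by auto
  have fB: "finite B" unfolding B_def using finite_subset[OF box_sub finite_Lam] .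
  have "(\<Sum>\<sigma>\<in>S. w \<sigma>) - (\<Sum>\<sigma>\<in>C. w \<sigma>) = (\<Sum>\<sigma>\<in>S - C. w \<sigma>)"
    by (rule sum_diff[OF fS CS, symmetric])
  also have "\<dots> \<le> (\<Sum>\<sigma>\<in>S - C. w \<sigma> * (\<Sum>y\<in>B. real (\<sigma> y)))"
  proof (rule sum_mono)
    fix \<sigma> assume "\<sigma> \<in> S - C"
    then obtain y where y: "y \<in> supp N \<sigma>" "y \<in> B" unfolding C_def Scheck0_def S_def B_def by blast
    have "1 \<le> real (\<sigma> y)" using y(1) unfolding supp_def by simp
    also have "\<dots> \<le> (\<Sum>y\<in>B. real (\<sigma> y))" by (rule member_le_sum[OF y(2) _ fB]) simp
    finally show "w \<sigma> \<le> w \<sigma> * (\<Sum>y\<in>B. real (\<sigma> y))" using wpos[of \<sigma>]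
      by (simp add: mult_le_cancel_left1)
  qed
  also have "\<dots> \<le> (\<Sum>\<sigma>\<in>S. w \<sigma> * (\<Sum>y\<in>B. real (\<sigma> y)))"
    by (rule sum_mono2[OF fS]) (auto intro!: mult_nonneg_nonneg sum_nonneg less_imp_le[OF wpos])
  also have "\<dots> = (\<Sum>y\<in>B. F y)"
    unfolding F_def by (simp add: sum.swap[of _ B] sum_distrib_left)
  also have "\<dots> = (\<Sum>y\<in>B. F (0, 0))"
    by (rule sum.cong[OF refl]) (use Fc box_sub B_def in blast)
  also have "\<dots> = real (card B) * real n / real (card (Lam N)) * (\<Sum>\<sigma>\<in>S. w \<sigma>)"
    using F0 by simp
  finally show "(\<Sum>\<sigma>\<in>S. w \<sigma>) - (\<Sum>\<sigma>\<in>C. w \<sigma>) \<le> real (card B) * real n / real (card (Lam N)) * (\<Sum>\<sigma>\<in>S. w \<sigma>)" .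
qed




lemma mod_neg: assumes "- (int N) \<le> x" "x < 0" shows "x mod int N = x + int N"
proof -
  have "(x + int N) mod int N = x + int N" using assms by (intro mod_pos_pos_trivial) auto
  thus ?thesis by simp
qed

lemma tdist0_ge: assumes "odd N" "- half N \<le> a" "a \<le> half N" shows "\<bar>a\<bar> \<le> tdist N 0 a"
proof -
  have h: "int N = 2 * half N + 1" "half N \<ge> 0" using odd_half[OF assms(1)] by auto
  have 1: "\<bar>a\<bar> \<le> a mod int N"
  proof (cases "a < 0")
    case True thus ?thesis using mod_neg[of N a] h assms by linarith
  next
    case False thus ?thesis using h assms by (subst mod_pos_pos_trivial) auto
  qed
  have 2: "\<bar>a\<bar> \<le> (- a) mod int N"
  proof (cases "a > 0")
    case True thus ?thesis using mod_neg[of N "-a"] h assms by linarith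
  next
    case False thus ?thesis using h assms by (subst mod_pos_pos_trivial) auto
  qed
  show ?thesis unfolding tdist_def using 1 2 by simp
qed

lemma card_box0: assumes "odd N" "odd L" shows "card (box N L (0, 0)) \<le> L ^ 2"
proof -
  define r where "r = (int L - 1) div 2"
  have r: "2 * r + 1 = int L" "r \<ge> 0" unfolding r_def using assms(2) by (auto elim!: oddE)
  have "box N L (0, 0) \<subseteq> {-r..r} \<times> {-r..r}"
  proof
    fix y assume y: "y \<in> box N L (0, 0)"
    hence yL: "y \<in> Lam N" and t: "tdist N 0 (fst y) \<le> r" "tdist N 0 (snd y) \<le> r"
      unfolding box_def r_def by auto
    have "\<bar>fst y\<bar> \<le> r" "\<bar>snd y\<bar> \<le> r"
      using tdist0_ge[OF assms(1), of "fst y"] tdist0_ge[OF assms(1), of "snd y"] yL t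
      unfolding Lam_iff by auto
    thus "y \<in> {-r..r} \<times> {-r..r}" by (cases y) auto
  qed
  hence "card (box N L (0, 0)) \<le> card ({-r..r} \<times> {-r..r})" by (intro card_mono) auto
  also have "\<dots> = L ^ 2" using r by (simp add: card_cartesian_product power2_eq_square)
  finally show ?thesis .
qed

lemma tdist_le: assumes "N > 0" "tdist N a b \<le> t" shows "\<exists>k. \<bar>a - b - k * int N\<bar> \<le> t"
proof -
  have "(a - b) mod int N \<le> t \<or> (b - a) mod int N \<le> t" using assms(2) unfolding tdist_def by linarith
  thus ?thesis
  proof
    assume 1: "(a - b) mod int N \<le> t"
    have "a - b - (a - b) div int N * int N = (a - b) mod int N" by (rule minus_div_mult_eq_mod)
    moreover have "(a - b) mod int N \<ge> 0" using assms(1) by simp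
    ultimately show ?thesis using 1 by (intro exI[of _ "(a - b) div int N"]) simp
  next
    assume 1: "(b - a) mod int N \<le> t"
    have "b - a - (b - a) div int N * int N = (b - a) mod int N" by (rule minus_div_mult_eq_mod)
    moreover have "(b - a) mod int N \<ge> 0" using assms(1) by simp
    ultimately show ?thesis using 1 by (intro exI[of _ "- ((b - a) div int N)"]) simp
  qed
qed

lemma far: fixes d k Nn Ll :: int assumes "Ll \<le> \<bar>d\<bar>" "\<bar>d\<bar> \<le> Nn - Ll" "Ll > 0"
  shows "Ll \<le> \<bar>d - k * Nn\<bar>"
proof -
  have Nn: "Nn > 0" using assms by linarith
  consider "k = 0" | "k \<ge> 1" | "k \<le> -1" by linarith
  thus ?thesis
  proof cases
    case 1 thus ?thesis using assms by simp
  next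
    case 2 hence "k * Nn \<ge> 1 * Nn" using Nn by (intro mult_right_mono) auto
    thus ?thesis using assms by linarith
  next
    case 3 hence "k * Nn \<le> (-1) * Nn" using Nn by (intro mult_right_mono) auto
    thus ?thesis using assms by linarith
  qed
qed

lemma grid_diff: fixes i i' :: nat and K Ll Nn :: int
  assumes "int i < K" "int i' < K" "i \<noteq> i'" "K * Ll \<le> Nn" "Ll > 0"
  shows "Ll \<le> \<bar>(int i' - int i) * Ll\<bar>" "\<bar>(int i' - int i) * Ll\<bar> \<le> Nn - Ll"
proof -
  define m where "m = int i' - int i"
  have m1: "1 \<le> \<bar>m\<bar>" "\<bar>m\<bar> \<le> K - 1" using assms unfolding m_def by auto
  have e: "\<bar>m * Ll\<bar> = \<bar>m\<bar> * Ll" using assms(5) by (simp add: abs_mult)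
  have "1 * Ll \<le> \<bar>m\<bar> * Ll" using m1 assms(5) by (intro mult_right_mono) auto
  thus "Ll \<le> \<bar>(int i' - int i) * Ll\<bar>" using e unfolding m_def by simp
  have "\<bar>m\<bar> * Ll \<le> (K - 1) * Ll" using m1 assms(5) by (intro mult_right_mono) auto
  thus "\<bar>(int i' - int i) * Ll\<bar> \<le> Nn - Ll" using e assms(4) unfolding m_def by (simp add: algebra_simps)
qed

lemma grid_coord: fixes i i' :: nat
  assumes N: "odd N" and "odd L" "int i < int (N div L)" "int i' < int (N div L)" "i \<noteq> i'"
    "tdist N x (- half N + int i * int L) \<le> (int L - 1) div 2"
    "tdist N x (- half N + int i' * int L) \<le> (int L - 1) div 2"
  shows False
proof -
  have L0: "int L > 0" using assms(2) by (auto elim!: oddE)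
  have N0: "N > 0" using N by (auto elim!: oddE)
  have KL: "int (N div L) * int L \<le> int N"
    by (metis div_times_less_eq_dividend of_nat_le_iff of_nat_mult)
  obtain k1 where k1: "\<bar>x - (- half N + int i * int L) - k1 * int N\<bar> \<le> (int L - 1) div 2"
    using tdist_le[OF N0 assms(6)] by blast
  obtain k2 where k2: "\<bar>x - (- half N + int i' * int L) - k2 * int N\<bar> \<le> (int L - 1) div 2"
    using tdist_le[OF N0 assms(7)] by blast
  have "2 * ((int L - 1) div 2) \<le> int L - 1" by simp
  hence "\<bar>(int i' - int i) * int L - (k1 - k2) * int N\<bar> \<le> int L - 1" using k1 k2
    by (simp add: algebra_simps)
  moreover have "int L \<le> \<bar>(int i' - int i) * int L - (k1 - k2) * int N\<bar>"
    using grid_diff[OF assms(3,4,5) KL L0] by (intro far) (use L0 in auto)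
  ultimately show False by linarith
qed

lemma S_nonempty:
  assumes N: "odd N" and L: "odd L" and nK: "n_part D N \<beta> \<le> (N div L) ^ 2"
  shows "Sset U D N L \<beta> \<noteq> {}"
proof -
  define K where "K = N div L"
  define h where "h = half N"
  define g where "g = (\<lambda>(i, j). (- h + int i * int L, - h + int j * int L))"
  define G where "G = g ` ({..<K} \<times> {..<K})"
  have L0: "int L > 0" using L by (auto elim!: oddE)
  have hN: "int N = 2 * h + 1" "h \<ge> 0" using odd_half[OF N] unfolding h_def by auto
  have KL: "int K * int L \<le> int N" unfolding K_def
    by (metis div_times_less_eq_dividend of_nat_le_iff of_nat_mult)
  have inj: "inj_on g ({..<K} \<times> {..<K})"
  proof (rule inj_onI)
    fix p q assume "p \<in> {..<K} \<times> {..<K}" "q \<in> {..<K} \<times> {..<K}" "g p = g q"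
    hence "int (fst p) * int L = int (fst q) * int L" "int (snd p) * int L = int (snd q) * int L"
      unfolding g_def by (auto simp: case_prod_beta)
    thus "p = q" using L0 by (simp add: prod_eq_iff)
  qed
  have cG: "card G = K ^ 2" unfolding G_def using card_image[OF inj]
    by (simp add: card_cartesian_product power2_eq_square)
  have coordL: "- h \<le> - h + int i * int L \<and> - h + int i * int L \<le> h" if "i < K" for i
  proof -
    have "int i \<le> int K - 1" using that by simp
    hence "int i * int L \<le> (int K - 1) * int L" using L0 by (intro mult_right_mono) auto
    thus ?thesis using KL L0 hN by (simp add: algebra_simps)
  qed
  have GL: "G \<subseteq> Lam N"
  proof
    fix p assume "p \<in> G"
    then obtain i j where ij: "i < K" "j < K" "p = g (i, j)" unfolding G_def by blast
    show "p \<in> Lam N" unfolding Lam_iff ij(3) g_def h_def[symmetric] using coordL[OF ij(1)] coordL[OF ij(2)]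
      by simp
  qed
  obtain T where T: "T \<subseteq> G" "card T = n_part D N \<beta>" "finite T"
    using obtain_subset_with_card_n[of "n_part D N \<beta>" G] nK cG K_def by auto
  define \<sigma> where "\<sigma> = (\<lambda>x. if x \<in> T then 1 else 0 :: nat)"
  have supp: "supp N \<sigma> = T" unfolding supp_def \<sigma>_def using T(1) GL by auto
  have X: "\<sigma> \<in> Xm N (n_part D N \<beta>)" unfolding Xm_def using supp T GL unfolding \<sigma>_def by auto
  have box1: "card (T \<inter> box N L x) \<le> 1" for x
  proof -
    have "\<forall>a1\<in>T \<inter> box N L x. \<forall>a2\<in>T \<inter> box N L x. a1 = a2"
    proof (intro ballI, rule ccontr)
      fix a1 a2 assume a: "a1 \<in> T \<inter> box N L x" "a2 \<in> T \<inter> box N L x" "a1 \<noteq> a2"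
      obtain i j where ij: "i < K" "j < K" "a1 = g (i, j)" using a(1) T(1) unfolding G_def by blast
      obtain i' j' where ij': "i' < K" "j' < K" "a2 = g (i', j')" using a(2) T(1) unfolding G_def by blast
      have b1: "tdist N (fst x) (- half N + int i * int L) \<le> (int L - 1) div 2"
               "tdist N (snd x) (- half N + int j * int L) \<le> (int L - 1) div 2"
        using a(1) ij(3) unfolding box_def g_def h_def by auto
      have b2: "tdist N (fst x) (- half N + int i' * int L) \<le> (int L - 1) div 2"
               "tdist N (snd x) (- half N + int j' * int L) \<le> (int L - 1) div 2"
        using a(2) ij'(3) unfolding box_def g_def h_def by auto
      have "i \<noteq> i' \<or> j \<noteq> j'" using a(3) ij(3) ij'(3) by auto
      thus False
      proof
        assume "i \<noteq> i'"
        thus False using grid_coord[OF N L _ _ _ b1(1) b2(1)] ij(1) ij'(1) K_def by auto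
      next
        assume "j \<noteq> j'"
        thus False using grid_coord[OF N L _ _ _ b1(2) b2(2)] ij(2) ij'(2) K_def by auto
      qed
    qed
    thus ?thesis using card_le_Suc0_iff_eq[of "T \<inter> box N L x"] T(3) by simp
  qed
  have "card (supp N \<sigma> \<inter> box N L x) \<le> ell_c U D * (ell_c U D - 1) + 1" for x
    using box1[of x] supp by simp
  hence "\<sigma> \<in> Sset U D N L \<beta>" unfolding Sset_def using X by blast
  thus ?thesis by blast
qed




lemma card_Lam: assumes "odd N" shows "card (Lam N) = N ^ 2"
proof -
  have h: "int N = 2 * half N + 1" "half N \<ge> 0" using odd_half[OF assms] by auto
  have "card (Lam N) = nat (2 * half N + 1) * nat (2 * half N + 1)"
    unfolding Lam_def by (simp add: card_cartesian_product)
  also have "\<dots> = N * N" using h by (metis nat_int)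
  finally show ?thesis by (simp add: power2_eq_square)
qed

lemma n_part_le: "real (n_part D N \<beta>) \<le> exp (- \<beta> * D) * real (card (Lam N)) + 1"
proof -
  have "0 \<le> exp (- \<beta> * D) * real (card (Lam N))" by simp
  hence "real (n_part D N \<beta>) = real_of_int \<lceil>exp (- \<beta> * D) * real (card (Lam N))\<rceil>"
    unfolding n_part_def by simp
  thus ?thesis by linarith
qed

lemma nK_bound:
  fixes Nr Lr Kr \<rho> \<epsilon> nr :: real
  assumes "Lr > 0" "Nr \<ge> 0" "Kr \<ge> 0" "Nr < (Kr + 1) * Lr" "\<rho> > 0" "\<epsilon> = Lr^2 * \<rho>" "\<epsilon> \<le> 1/4"
    "\<rho> * Nr^2 \<ge> 64" "nr \<le> \<rho> * Nr^2 + 1"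
  shows "nr \<le> Kr ^ 2"
proof -
  have "Nr^2 \<le> ((Kr + 1) * Lr)^2" using assms by (intro power_mono) auto
  hence "\<rho> * Nr^2 \<le> \<rho> * ((Kr + 1) * Lr)^2" using assms(5) by (intro mult_left_mono) auto
  also have "\<dots> = \<epsilon> * (Kr + 1)^2" using assms(6) by (simp add: power_mult_distrib)
  also have "\<dots> \<le> 1/4 * (Kr + 1)^2" using assms(7) by (intro mult_right_mono) auto
  finally have b: "\<rho> * Nr^2 \<le> 1/4 * (Kr + 1)^2" .
  have K15: "Kr \<ge> 15"
  proof (rule ccontr)
    assume "\<not> Kr \<ge> 15"
    hence "(Kr + 1)^2 < 16^2" using assms(3) by (intro power_strict_mono) auto
    thus False using b assms(8) by simp
  qed
  have "0 \<le> (3 * Kr - 5) * (Kr + 1)" using K15 by (intro mult_nonneg_nonneg) auto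
  hence "1/4 * (Kr + 1)^2 + 1 \<le> Kr^2" by (simp add: power2_eq_square algebra_simps)
  thus ?thesis using b assms(9) by linarith
qed

lemma pointwise:
  fixes U D \<beta> :: real and N L :: nat
  assumes N: "odd N" and L: "odd L"
    and e: "real L ^ 2 * exp (- \<beta> * D) \<le> 1/4"
    and r: "real (card (Lam N)) * exp (- \<beta> * D) \<ge> 64"
  defines "\<epsilon> \<equiv> real L ^ 2 * exp (- \<beta> * D)"
  defines "q \<equiv> gibbs U D N \<beta> (Scheck0 U D N L \<beta>) / gibbs U D N \<beta> (Sset U D N L \<beta>)"
  shows "1 - (\<epsilon> + \<epsilon> / (real (card (Lam N)) * exp (- \<beta> * D))) \<le> q \<and> q \<le> 1"
proof -
  define \<rho> where "\<rho> = exp (- \<beta> * D)"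
  define \<Lambda> where "\<Lambda> = real (card (Lam N))"
  define n where "n = n_part D N \<beta>"
  define K where "K = N div L"
  define S where "S = Sset U D N L \<beta>"
  define C where "C = Scheck0 U D N L \<beta>"
  define w where "w = (\<lambda>\<sigma>. exp (- \<beta> * Ham U N \<sigma>))"
  define X where "X = Xm N n"
  have L0: "real L > 0" using L by (auto elim!: oddE)
  have \<rho>0: "\<rho> > 0" unfolding \<rho>_def by simp
  have \<Lambda>N: "\<Lambda> = real N ^ 2" unfolding \<Lambda>_def using card_Lam[OF N] by simp
  have \<Lambda>0: "\<Lambda> > 0" using r \<rho>0 unfolding \<Lambda>_def \<rho>_def
    by (metis mult_eq_0_iff not_numeral_le_zero of_nat_0_less_iff gr0I of_nat_0)
  have nle: "real n \<le> \<rho> * \<Lambda> + 1" unfolding n_def \<rho>_def \<Lambda>_def by (rule n_part_le)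
  have KN: "real N < (real K + 1) * real L"
  proof -
    have "N = K * L + N mod L" unfolding K_def by simp
    moreover have "N mod L < L" using L0 by simp
    ultimately have "N < (K + 1) * L" by (metis add_less_cancel_left mult_Suc Suc_eq_plus1 add.commute)
    hence "real N < real ((K + 1) * L)" by linarith
    thus ?thesis by (simp add: algebra_simps)
  qed
  have "real n \<le> real K ^ 2"
    by (rule nK_bound[OF L0 _ _ KN \<rho>0 refl]) (use e r nle \<Lambda>N in \<open>auto simp: \<rho>_def \<Lambda>_def mult.commute\<close>)
  hence nK: "n \<le> K ^ 2" by (metis of_nat_le_iff of_nat_power)
  have Sne: "S \<noteq> {}" unfolding S_def using S_nonempty[OF N L] nK n_def K_def by blast
  have fS: "finite S" unfolding S_def by (rule finite_Sset)
  have wpos: "w \<sigma> > 0" for \<sigma> unfolding w_def by simp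
  have ZS: "(\<Sum>\<sigma>\<in>S. w \<sigma>) > 0" using fS Sne wpos by (intro sum_pos) auto
  have SX: "S \<subseteq> X" unfolding S_def X_def Sset_def n_def by auto
  have fX: "finite X" unfolding X_def by (rule finite_Xm)
  have ZX: "(\<Sum>\<sigma>\<in>X. w \<sigma>) > 0" using fX Sne SX wpos by (intro sum_pos) auto
  have mb: "(\<Sum>\<sigma>\<in>S. w \<sigma>) - (\<Sum>\<sigma>\<in>C. w \<sigma>) \<le> real (card (box N L (0, 0))) * real n / \<Lambda> * (\<Sum>\<sigma>\<in>S. w \<sigma>)"
    and CS: "C \<subseteq> S"
    using main_bound[OF N, where U=U and D=D and L=L and \<beta>=\<beta>] unfolding S_def C_def w_def n_def \<Lambda>_def by auto
  have q: "q = (\<Sum>\<sigma>\<in>C. w \<sigma>) / (\<Sum>\<sigma>\<in>S. w \<sigma>)"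
  proof -
    have "S \<inter> X = S" "C \<inter> X = C" using SX CS by auto
    moreover have g: "gibbs U D N \<beta> A = (\<Sum>\<sigma>\<in>A \<inter> X. w \<sigma>) / (\<Sum>\<sigma>\<in>X. w \<sigma>)" for A
      unfolding gibbs_def w_def X_def n_def by simp
    ultimately show ?thesis unfolding q_def S_def[symmetric] C_def[symmetric] g using ZX by simp
  qed
  have ZC: "(\<Sum>\<sigma>\<in>C. w \<sigma>) \<le> (\<Sum>\<sigma>\<in>S. w \<sigma>)"
    by (rule sum_mono2[OF fS CS]) (simp add: less_imp_le[OF wpos])
  have cb: "real (card (box N L (0, 0))) \<le> real L ^ 2" using card_box0[OF N L] by (metis of_nat_le_iff of_nat_power)
  have "real (card (box N L (0, 0))) * real n / \<Lambda> \<le> real L ^ 2 * (\<rho> * \<Lambda> + 1) / \<Lambda>"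
    using cb nle \<Lambda>0 by (intro divide_right_mono mult_mono) auto
  also have "\<dots> = \<epsilon> + \<epsilon> / (\<Lambda> * \<rho>)" unfolding \<epsilon>_def \<rho>_def[symmetric] using \<Lambda>0 \<rho>0
    by (simp add: field_simps)
  finally have eb: "real (card (box N L (0, 0))) * real n / \<Lambda> \<le> \<epsilon> + \<epsilon> / (\<Lambda> * \<rho>)" .
  have "(\<Sum>\<sigma>\<in>S. w \<sigma>) - (\<Sum>\<sigma>\<in>C. w \<sigma>) \<le> (\<epsilon> + \<epsilon> / (\<Lambda> * \<rho>)) * (\<Sum>\<sigma>\<in>S. w \<sigma>)"
    using mb eb ZS by (meson mult_right_mono less_imp_le order_trans)
  hence "1 - (\<epsilon> + \<epsilon> / (\<Lambda> * \<rho>)) \<le> (\<Sum>\<sigma>\<in>C. w \<sigma>) / (\<Sum>\<sigma>\<in>S. w \<sigma>)"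
    using ZS by (simp add: field_simps)
  moreover have "(\<Sum>\<sigma>\<in>C. w \<sigma>) / (\<Sum>\<sigma>\<in>S. w \<sigma>) \<le> 1" using ZC ZS by simp
  ultimately show ?thesis unfolding q \<Lambda>_def \<rho>_def by simp
qed




theorem lemmaB2:
  fixes U D :: real
    and N :: "real \<Rightarrow> nat" and L :: "real \<Rightarrow> nat" and \<delta> :: "real \<Rightarrow> real"
  assumes "U > 0" and "U < D" and "D < 2 * U"
    and "U / (2 * U - D) \<notin> \<nat>"
    and "\<forall>\<beta>. odd (N \<beta>)"
    and "filterlim (\<lambda>\<beta>. real (card (Lam (N \<beta>))) * exp (- \<beta> * D)) at_top at_top"
    and "((\<lambda>\<beta>. real (card (Lam (N \<beta>))) * exp (- \<beta> * Gamma U D)) \<longlongrightarrow> 0) at_top"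
    and "\<forall>\<beta>. odd (L \<beta>) \<and> real (L \<beta>) ^ 2 = exp ((D - \<delta> \<beta>) * \<beta>)"
    and "(\<delta> \<longlongrightarrow> 0) at_top"
    and "filterlim (\<lambda>\<beta>. \<beta> * \<delta> \<beta>) at_top at_top"
  shows "((\<lambda>\<beta>. gibbs U D (N \<beta>) \<beta> (Scheck0 U D (N \<beta>) (L \<beta>) \<beta>)
                / gibbs U D (N \<beta>) \<beta> (Sset U D (N \<beta>) (L \<beta>) \<beta>)) \<longlongrightarrow> 1) at_top"
proof -
  define \<epsilon> where "\<epsilon> \<beta> = real (L \<beta>) ^ 2 * exp (- \<beta> * D)" for \<beta>
  define R where "R \<beta> = real (card (Lam (N \<beta>))) * exp (- \<beta> * D)" for \<beta>
  define E where "E \<beta> = \<epsilon> \<beta> + \<epsilon> \<beta> / R \<beta>" for \<beta>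
  have eps: "\<epsilon> \<beta> = exp (- (\<beta> * \<delta> \<beta>))" for \<beta>
  proof -
    have "\<epsilon> \<beta> = exp ((D - \<delta> \<beta>) * \<beta> + - \<beta> * D)" unfolding \<epsilon>_def using assms(8) by (simp add: exp_add[symmetric])
    also have "(D - \<delta> \<beta>) * \<beta> + - \<beta> * D = - (\<beta> * \<delta> \<beta>)" by (simp add: algebra_simps)
    finally show ?thesis .
  qed
  have "filterlim (\<lambda>\<beta>. - (\<beta> * \<delta> \<beta>)) at_bot at_top"
    using filterlim_uminus_at_top[THEN iffD1, OF assms(10)] .
  hence eps0: "(\<epsilon> \<longlongrightarrow> 0) at_top" unfolding eps by (rule filterlim_compose[OF exp_at_bot])
  have R: "filterlim R at_top at_top" unfolding R_def by (rule assms(6))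
  have "((\<lambda>\<beta>. \<epsilon> \<beta> + \<epsilon> \<beta> / R \<beta>) \<longlongrightarrow> 0 + 0) at_top"
    by (intro tendsto_add eps0 tendsto_divide_0[OF eps0] filterlim_at_top_imp_at_infinity[OF R])
  hence E0: "(E \<longlongrightarrow> 0) at_top" unfolding E_def by simp
  have ev1: "eventually (\<lambda>\<beta>. \<epsilon> \<beta> < 1/4) at_top" using order_tendstoD(2)[OF eps0, of "1/4"] by simp
  have ev2: "eventually (\<lambda>\<beta>. 64 \<le> R \<beta>) at_top" using R unfolding filterlim_at_top by blast
  have ev: "eventually (\<lambda>\<beta>. 1 - E \<beta> \<le> gibbs U D (N \<beta>) \<beta> (Scheck0 U D (N \<beta>) (L \<beta>) \<beta>)
                / gibbs U D (N \<beta>) \<beta> (Sset U D (N \<beta>) (L \<beta>) \<beta>) \<and>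
          gibbs U D (N \<beta>) \<beta> (Scheck0 U D (N \<beta>) (L \<beta>) \<beta>)
                / gibbs U D (N \<beta>) \<beta> (Sset U D (N \<beta>) (L \<beta>) \<beta>) \<le> 1) at_top"
    using ev1 ev2
  proof eventually_elim
    case (elim \<beta>)
    show ?case using pointwise[of "N \<beta>" "L \<beta>" \<beta> D U] assms(5,8) elim
      unfolding E_def \<epsilon>_def R_def by auto
  qed
  show ?thesis
  proof (rule tendsto_sandwich[of "\<lambda>\<beta>. 1 - E \<beta>" _ _ "\<lambda>_. 1"])
    show "eventually (\<lambda>\<beta>. 1 - E \<beta> \<le> gibbs U D (N \<beta>) \<beta> (Scheck0 U D (N \<beta>) (L \<beta>) \<beta>)
                / gibbs U D (N \<beta>) \<beta> (Sset U D (N \<beta>) (L \<beta>) \<beta>)) at_top"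
      using ev by (rule eventually_mono) blast
    show "eventually (\<lambda>\<beta>. gibbs U D (N \<beta>) \<beta> (Scheck0 U D (N \<beta>) (L \<beta>) \<beta>)
                / gibbs U D (N \<beta>) \<beta> (Sset U D (N \<beta>) (L \<beta>) \<beta>) \<le> 1) at_top"
      using ev by (rule eventually_mono) blast
    show "((\<lambda>\<beta>. 1 - E \<beta>) \<longlongrightarrow> 1) at_top" using tendsto_diff[OF tendsto_const E0, of 1] by simp
  qed simp
qed


end
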